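(* Let $K$ be a positive semiring and let $X_1,\ldots,X_m$ be an acyclic collection of finite sets of attributes. There exists a permutation $\pi$ of $[m]$ (depending only on $X_1,\ldots,X_m$) such that for every pairwise consistent collection of $K$-relations $R_1,\ldots,R_m$ with $R_i$ over $X_i$, the collection is globally consistent and the iterated left-join of $R_{\pi(1)},\ldots,R_{\pi(m)}$ witnesses its global consistency.
   Context: A commutative semiring $(K,+,\cdot,0,1)$ with $0\neq 1$ is positive if $a+b=0$ implies $a=b=0$, and $ab=0$ implies $a=0$ or $b=0$. Each attribute $A$ has a domain $\mathrm{Dom}(A)$. For a finite set of attributes $X$, $\mathrm{Tup}(X)$ is the set of maps assigning to each $A\in X$ an element of $\mathrm{Dom}(A)$; $t[Y]$ is restriction; $XY=X\cup Y$. A $K$-relation over $X$ is a map $R:\mathrm{Tup}(X)\to K$ with finite support $R'=\{t:R(t)\neq0\}$; its marginal on $Y\subseteq X$ is $R[Y](u)=\sum_{r\in R',r[Y]=u}R(r)$. $R\equiv S$ means $aR=bS$ for nonzero $a,b\in K$. $R$ over $X$ and $S$ over $Y$ are consistent if some $K$-relation $T$ over $XY$ has $R\equiv T[X]$, $S\equiv T[Y]$. A collection $R_1,\dots,R_m$ ($R_i$ over $X_i$) is pairwise consistent if every two members are consistent, and globally consistent if some $K$-relation $T$ over $X_1\cup\cdots\cup X_m$ (a witness) satisfies $R_i\equiv T[X_i]$ for all $i$. With $c_T(u)=\prod_{v\in T[Z]',v\neq u}T[Z](v)$ (empty product $1$), the join of $R$ over $X$ and $S$ over $Y$ is $(R\Join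 S)(t)=R(t[X])S(t[Y])c_S(t[X\cap Y])$ with $Z=X\cap Y$. The iterated left-join of $R_1,\ldots,R_m$ is $R_1$ if $m=1$ and $T\Join R_m$ for $m\ge2$, where $T$ is the iterated left-join of $R_1,\dots,R_{m-1}$. Acyclicity: view $X_1,\dots,X_m$ as the hyperedges of the hypergraph $H=(V,E)$ with $V=\bigcup X_i$. The reduction $R(H)$ keeps only hyperedges not properly contained in another; $H$ is reduced if $H=R(H)$. For $W\subseteq V$, $H[W]=(W,\{X\cap W:X\in E\}\setminus\{\emptyset\})$. For a reduced $H$ and distinct hyperedges $X,Y$ with $X\cap Y\neq\emptyset$, $X\cap Y$ is an articulation set if $R(H[V\setminus(X\cap Y)])$ has more connected components than $H$. A reduced $H$ is acyclic if for every $W\subseteq V$ such that $R(H[W])$ is connected with more than one hyperedge, $R(H[W])$ has an articulation set; an arbitrary $H$ is acyclic if $R(H)$ is. (This is the standard $\alpha$-acyclicity; equivalently, $H$ has a join tree / the running intersection property.) *)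

theory Defs
  imports "HOL-Combinatorics.Permutations"
begin

class positive_semiring = comm_semiring_1 +
  assumes pos_add_eq_0: "a + b = 0 \<Longrightarrow> a = 0 \<and> b = 0"
  assumes pos_mult_eq_0: "a * b = 0 \<Longrightarrow> a = 0 \<or> b = 0"
(* 0 \<noteq> 1 is part of comm_semiring_1 (zero_neq_one) *)

(* Tuples over X: partial maps from attributes to values, defined exactly on X,
   with values in the attribute domains. Restriction t[Y] is  t |` Y. *)
definition Tup :: "('a \<Rightarrow> 'd set) \<Rightarrow> 'a set \<Rightarrow> ('a \<rightharpoonup> 'd) set" where
  "Tup Dom X = {t. dom t = X \<and> (\<forall>A\<in>X. the (t A) \<in> Dom A)}"

definition krel :: "('a \<Rightarrow> 'd set) \<Rightarrow> 'a set \<Rightarrow> (('a \<rightharpoonup> 'd) \<Rightarrow> 'k::comm_semiring_1) \<Rightarrow> bool" where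
  "krel Dom X R \<longleftrightarrow> (\<forall>t. t \<notin> Tup Dom X \<longrightarrow> R t = 0) \<and> finite {t. R t \<noteq> 0}"

definition supp :: "(('a \<rightharpoonup> 'd) \<Rightarrow> 'k::comm_semiring_1) \<Rightarrow> ('a \<rightharpoonup> 'd) set" where
  "supp R = {t. R t \<noteq> 0}"

definition marg :: "(('a \<rightharpoonup> 'd) \<Rightarrow> 'k::comm_semiring_1) \<Rightarrow> 'a set \<Rightarrow> ('a \<rightharpoonup> 'd) \<Rightarrow> 'k" where
  "marg R Y u = (\<Sum>r\<in>{r\<in>supp R. r |` Y = u}. R r)"

definition krel_equiv :: "(('a \<rightharpoonup> 'd) \<Rightarrow> 'k::comm_semiring_1) \<Rightarrow> (('a \<rightharpoonup> 'd) \<Rightarrow> 'k) \<Rightarrow> bool" where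
  "krel_equiv R S \<longleftrightarrow> (\<exists>a b. a \<noteq> 0 \<and> b \<noteq> 0 \<and> (\<forall>t. a * R t = b * S t))"

definition consistent ::
  "('a \<Rightarrow> 'd set) \<Rightarrow> 'a set \<Rightarrow> (('a \<rightharpoonup> 'd) \<Rightarrow> 'k::comm_semiring_1) \<Rightarrow> 'a set \<Rightarrow> (('a \<rightharpoonup> 'd) \<Rightarrow> 'k) \<Rightarrow> bool" where
  "consistent Dom X R Y S \<longleftrightarrow>
     (\<exists>T. krel Dom (X \<union> Y) T \<and> krel_equiv R (marg T X) \<and> krel_equiv S (marg T Y))"

definition pairwise_consistent ::
  "('a \<Rightarrow> 'd set) \<Rightarrow> nat \<Rightarrow> (nat \<Rightarrow> 'a set) \<Rightarrow> (nat \<Rightarrow> ('a \<rightharpoonup> 'd) \<Rightarrow> 'k::comm_semiring_1) \<Rightarrow> bool" where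
  "pairwise_consistent Dom m X R \<longleftrightarrow>
     (\<forall>i<m. \<forall>j<m. i \<noteq> j \<longrightarrow> consistent Dom (X i) (R i) (X j) (R j))"

definition global_witness ::
  "('a \<Rightarrow> 'd set) \<Rightarrow> nat \<Rightarrow> (nat \<Rightarrow> 'a set) \<Rightarrow> (nat \<Rightarrow> ('a \<rightharpoonup> 'd) \<Rightarrow> 'k::comm_semiring_1)
     \<Rightarrow> (('a \<rightharpoonup> 'd) \<Rightarrow> 'k) \<Rightarrow> bool" where
  "global_witness Dom m X R T \<longleftrightarrow>
     krel Dom (\<Union>i<m. X i) T \<and> (\<forall>i<m. krel_equiv (R i) (marg T (X i)))"

definition globally_consistent ::
  "('a \<Rightarrow> 'd set) \<Rightarrow> nat \<Rightarrow> (nat \<Rightarrow> 'a set) \<Rightarrow> (nat \<Rightarrow> ('a \<rightharpoonup> 'd) \<Rightarrow> 'k::comm_semiring_1) \<Rightarrow> bool" where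
  "globally_consistent Dom m X R \<longleftrightarrow> (\<exists>T. global_witness Dom m X R T)"

definition cfac :: "(('a \<rightharpoonup> 'd) \<Rightarrow> 'k::comm_semiring_1) \<Rightarrow> 'a set \<Rightarrow> ('a \<rightharpoonup> 'd) \<Rightarrow> 'k" where
  "cfac S Z u = (\<Prod>v\<in>supp (marg S Z) - {u}. marg S Z v)"

definition join ::
  "('a \<Rightarrow> 'd set) \<Rightarrow> 'a set \<Rightarrow> (('a \<rightharpoonup> 'd) \<Rightarrow> 'k::comm_semiring_1) \<Rightarrow> 'a set \<Rightarrow> (('a \<rightharpoonup> 'd) \<Rightarrow> 'k)
     \<Rightarrow> ('a \<rightharpoonup> 'd) \<Rightarrow> 'k" where
  "join Dom X R Y S t =
     (if t \<in> Tup Dom (X \<union> Y)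
      then R (t |` X) * S (t |` Y) * cfac S (X \<inter> Y) (t |` (X \<inter> Y))
      else 0)"

primrec ljoin_aux ::
  "('a \<Rightarrow> 'd set) \<Rightarrow> 'a set \<Rightarrow> (('a \<rightharpoonup> 'd) \<Rightarrow> 'k::comm_semiring_1)
     \<Rightarrow> ('a set \<times> (('a \<rightharpoonup> 'd) \<Rightarrow> 'k)) list \<Rightarrow> ('a \<rightharpoonup> 'd) \<Rightarrow> 'k" where
  "ljoin_aux Dom Y T [] = T"
| "ljoin_aux Dom Y T (p # ps) = ljoin_aux Dom (Y \<union> fst p) (join Dom Y T (fst p) (snd p)) ps"

definition iter_ljoin ::
  "('a \<Rightarrow> 'd set) \<Rightarrow> ('a set \<times> (('a \<rightharpoonup> 'd) \<Rightarrow> 'k::comm_semiring_1)) list \<Rightarrow> ('a \<rightharpoonup> 'd) \<Rightarrow> 'k" where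
  "iter_ljoin Dom ps = ljoin_aux Dom (fst (hd ps)) (snd (hd ps)) (tl ps)"

(* a hypergraph is given by its edge set; its vertex set is \<Union>E
   (in all hypergraphs considered here, every vertex lies in some edge) *)
definition reduction :: "'a set set \<Rightarrow> 'a set set" where
  "reduction E = {X\<in>E. \<not> (\<exists>Y\<in>E. X \<subset> Y)}"

definition induced :: "'a set set \<Rightarrow> 'a set \<Rightarrow> 'a set set" where
  "induced E W = ((\<lambda>X. X \<inter> W) ` E) - {{}}"

definition hg_adj :: "'a set set \<Rightarrow> ('a \<times> 'a) set" where
  "hg_adj E = {(u, v). \<exists>e\<in>E. u \<in> e \<and> v \<in> e}"

definition num_components :: "'a set set \<Rightarrow> nat" where
  "num_components E = card ((\<Union>E) // ((hg_adj E)\<^sup>+))"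

definition hg_connected :: "'a set set \<Rightarrow> bool" where
  "hg_connected E \<longleftrightarrow> num_components E = 1"

definition articulation_set :: "'a set set \<Rightarrow> 'a set \<Rightarrow> bool" where
  "articulation_set E S \<longleftrightarrow>
     (\<exists>X\<in>E. \<exists>Y\<in>E. X \<noteq> Y \<and> X \<inter> Y \<noteq> {} \<and> S = X \<inter> Y) \<and>
     num_components (reduction (induced E (\<Union>E - S))) > num_components E"

definition acyclic_reduced :: "'a set set \<Rightarrow> bool" where
  "acyclic_reduced E \<longleftrightarrow>
     (\<forall>W \<subseteq> \<Union>E. hg_connected (reduction (induced E W)) \<and> card (reduction (induced E W)) > 1
        \<longrightarrow> (\<exists>S. articulation_set (reduction (induced E W)) S))"

definition hg_acyclic :: "'a set set \<Rightarrow> bool" where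
  "hg_acyclic E \<longleftrightarrow> acyclic_reduced (reduction E)"

end

theory Submission
  imports Defs
begin


lemma pos_sum_nz:
  fixes f :: "'b \<Rightarrow> 'k::positive_semiring"
  assumes "finite A" "x \<in> A" "f x \<noteq> 0"
  shows "sum f A \<noteq> 0"
proof
  assume "sum f A = 0"
  hence "f x + sum f (A - {x}) = 0" using assms by (simp add: sum.remove)
  thus False using pos_add_eq_0 assms by blast
qed

lemma mult_nz: "(a::'k::positive_semiring) \<noteq> 0 \<Longrightarrow> b \<noteq> 0 \<Longrightarrow> a * b \<noteq> 0"
  using pos_mult_eq_0 by blast

lemma prod_nz:
  fixes f :: "'b \<Rightarrow> 'k::positive_semiring"
  shows "finite A \<Longrightarrow> (\<forall>x\<in>A. f x \<noteq> 0) \<Longrightarrow> prod f A \<noteq> 0"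
  by (induction A rule: finite_induct) (auto simp: mult_nz)

lemma krel_equiv_refl: "krel_equiv R R"
  unfolding krel_equiv_def by (intro exI[of _ 1]) simp

lemma krel_equiv_sym: "krel_equiv R S \<Longrightarrow> krel_equiv S R"
  unfolding krel_equiv_def
proof -
  assume "\<exists>a b. a \<noteq> 0 \<and> b \<noteq> 0 \<and> (\<forall>t. a * R t = b * S t)"
  then obtain a b where "a \<noteq> 0" "b \<noteq> 0" "\<forall>t. a * R t = b * S t" by blast
  thus "\<exists>a b. a \<noteq> 0 \<and> b \<noteq> 0 \<and> (\<forall>t. a * S t = b * R t)"
    by (intro exI[of _ b] exI[of _ a]) simp
qed

lemma krel_equiv_trans:
  fixes R :: "('a \<rightharpoonup> 'd) \<Rightarrow> 'k::positive_semiring"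
  assumes "krel_equiv R S" "krel_equiv S U" shows "krel_equiv R U"
proof -
  obtain a b where ab: "a \<noteq> 0" "b \<noteq> 0" "\<forall>t. a * R t = b * S t" using assms(1) unfolding krel_equiv_def by blast
  obtain c d where cd: "c \<noteq> 0" "d \<noteq> 0" "\<forall>t. c * S t = d * U t" using assms(2) unfolding krel_equiv_def by blast
  have "\<forall>t. (c*a) * R t = (b*d) * U t"
  proof
    fix t
    have "(c*a) * R t = c * (a * R t)" by (simp add: mult.assoc)
    also have "\<dots> = c * (b * S t)" using ab by simp
    also have "\<dots> = b * (c * S t)" by (simp only: mult.left_commute)
    also have "\<dots> = b * (d * U t)" using cd by simp
    also have "\<dots> = (b*d) * U t" by (simp only: mult.assoc)
    finally show "(c*a) * R t = (b*d) * U t" .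
  qed
  moreover have "c*a \<noteq> 0" "b*d \<noteq> 0" using ab cd mult_nz by auto
  ultimately show ?thesis unfolding krel_equiv_def by blast
qed

lemma krel_equiv_scale:
  fixes R :: "('a \<rightharpoonup> 'd) \<Rightarrow> 'k::positive_semiring"
  assumes "c \<noteq> 0" "\<forall>t. S t = c * R t" shows "krel_equiv R S"
  unfolding krel_equiv_def using assms by (intro exI[of _ c] exI[of _ 1]) auto

lemma marg_superset:
  assumes "finite F" "supp R \<subseteq> F"
  shows "marg R Y u = (\<Sum>r\<in>{r\<in>F. r |` Y = u}. R r)"
  unfolding marg_def
  by (rule sum.mono_neutral_left) (use assms in \<open>auto simp: supp_def\<close>)

lemma marg_scale:
  fixes R :: "('a \<rightharpoonup> 'd) \<Rightarrow> 'k::comm_semiring_1"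
  assumes "finite (supp R)"
  shows "marg (\<lambda>t. c * R t) Y u = c * marg R Y u"
proof -
  have "supp (\<lambda>t. c * R t) \<subseteq> supp R" by (auto simp: supp_def)
  hence "marg (\<lambda>t. c * R t) Y u = (\<Sum>r\<in>{r\<in>supp R. r |` Y = u}. c * R r)"
    using marg_superset[OF assms] by blast
  also have "\<dots> = c * marg R Y u" unfolding marg_def by (simp add: sum_distrib_left)
  finally show ?thesis .
qed

lemma supp_marg_sub:
  "supp (marg T X) \<subseteq> (\<lambda>r. r |` X) ` supp T"
proof
  fix v assume "v \<in> supp (marg T X)"
  hence ne: "marg T X v \<noteq> 0" unfolding supp_def by simp
  show "v \<in> (\<lambda>r. r |` X) ` supp T"
  proof (rule ccontr)
    assume "v \<notin> (\<lambda>r. r |` X) ` supp T"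
    hence "{r \<in> supp T. r |` X = v} = {}" by blast
    hence "marg T X v = 0" unfolding marg_def by (simp only: sum.empty)
    thus False using ne by simp
  qed
qed

lemma finite_supp_marg: "finite (supp T) \<Longrightarrow> finite (supp (marg T X))"
  by (rule finite_subset[OF supp_marg_sub]) simp

lemma marg_marg:
  assumes "finite (supp T)" "Z \<subseteq> X"
  shows "marg (marg T X) Z u = marg T Z u"
proof -
  let ?F = "(\<lambda>r. r |` X) ` supp T"
  have fF: "finite ?F" using assms by simp
  have "marg (marg T X) Z u = (\<Sum>v\<in>{v\<in>?F. v |` Z = u}. marg T X v)"
    using marg_superset[OF fF supp_marg_sub] by blast
  also have "\<dots> = (\<Sum>v\<in>{v\<in>?F. v |` Z = u}. \<Sum>r\<in>{r\<in>{r\<in>supp T. r |` Z = u}. r |` X = v}. T r)"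
  proof (rule sum.cong[OF refl])
    fix v assume "v \<in> {v\<in>?F. v |` Z = u}"
    hence vu: "v |` Z = u" by simp
    have "{r\<in>{r\<in>supp T. r |` Z = u}. r |` X = v} = {r\<in>supp T. r |` X = v}"
    proof -
      have "r |` X = v \<Longrightarrow> r |` Z = u" for r
      proof -
        assume "r |` X = v"
        hence "r |` X |` Z = u" using vu by simp
        thus "r |` Z = u" using assms(2) by (simp add: Int_absorb1)
      qed
      thus ?thesis by auto
    qed
    thus "marg T X v = (\<Sum>r\<in>{r\<in>{r\<in>supp T. r |` Z = u}. r |` X = v}. T r)"
      unfolding marg_def by simp
  qed
  also have "\<dots> = (\<Sum>r\<in>{r\<in>supp T. r |` Z = u}. T r)"
  proof (rule sum.group)
    show "finite {r \<in> supp T. r |` Z = u}" using assms by simp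
    show "finite {v\<in>?F. v |` Z = u}" using fF by simp
    show "(\<lambda>r. r |` X) ` {r \<in> supp T. r |` Z = u} \<subseteq> {v\<in>?F. v |` Z = u}"
      using assms(2) by (auto simp: Int_absorb1)
  qed
  also have "\<dots> = marg T Z u" unfolding marg_def ..
  finally show ?thesis .
qed

lemma krel_equiv_marg:
  fixes A :: "('a \<rightharpoonup> 'd) \<Rightarrow> 'k::positive_semiring"
  assumes "krel_equiv A B" "finite (supp A)" "finite (supp B)"
  shows "krel_equiv (marg A Z) (marg B Z)"
proof -
  obtain a b where ab: "a \<noteq> 0" "b \<noteq> 0" "\<forall>t. a * A t = b * B t" using assms(1) unfolding krel_equiv_def by blast
  have "(\<lambda>t. a * A t) = (\<lambda>t. b * B t)" using ab by auto
  have "\<forall>u. a * marg A Z u = b * marg B Z u"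
  proof
    fix u
    have "a * marg A Z u = marg (\<lambda>t. a * A t) Z u" using marg_scale[OF assms(2), of a Z] by simp
    also have "\<dots> = marg (\<lambda>t. b * B t) Z u" using \<open>(\<lambda>t. a * A t) = (\<lambda>t. b * B t)\<close> by simp
    also have "\<dots> = b * marg B Z u" using marg_scale[OF assms(3), of b Z] by simp
    finally show "a * marg A Z u = b * marg B Z u" .
  qed
  thus ?thesis unfolding krel_equiv_def using ab by blast
qed

lemma krel_finite: "krel Dom X R \<Longrightarrow> finite (supp R)"
  unfolding krel_def supp_def by auto

lemma krel_dom: "krel Dom X R \<Longrightarrow> R r \<noteq> 0 \<Longrightarrow> r \<in> Tup Dom X"
  unfolding krel_def by auto




lemma restrict_add_left:
  assumes "dom r = Y" "dom s = X" "r |` (Y \<inter> X) = s |` (Y \<inter> X)"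
  shows "(r ++ s) |` Y = r"
proof (rule ext)
  fix x show "((r ++ s) |` Y) x = r x"
  proof (cases "x \<in> Y")
    case True
    show ?thesis
    proof (cases "x \<in> X")
      case True2: True
      have "(r |` (Y \<inter> X)) x = (s |` (Y \<inter> X)) x" using assms(3) by simp
      hence "r x = s x" using True True2 by simp
      thus ?thesis using True True2 by (simp add: map_add_def split: option.splits)
    next
      case False
      then have "s x = None" using assms(2) by auto
      thus ?thesis using True by (simp add: map_add_def)
    qed
  next
    case False
    thus ?thesis using assms(1) by auto
  qed
qed

lemma restrict_add_right:
  assumes "dom s = X"
  shows "(r ++ s) |` X = s"
proof (rule ext)
  fix x show "((r ++ s) |` X) x = s x"
  proof (cases "x \<in> X")
    case True
    then obtain y where "s x = Some y" using assms by auto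
    thus ?thesis using True by (simp add: map_add_def)
  next
    case False
    thus ?thesis using assms by auto
  qed
qed

lemma merge_restrict:
  assumes "dom t = Y \<union> X"
  shows "t = (t |` Y) ++ (t |` X)"
proof (rule ext)
  fix x show "t x = ((t |` Y) ++ (t |` X)) x"
  proof (cases "x \<in> X")
    case True
    show ?thesis
    proof (cases "t x")
      case None thus ?thesis using True assms by auto
    next
      case (Some y) thus ?thesis using True by (simp add: map_add_def)
    qed
  next
    case False
    thus ?thesis using assms by (cases "x \<in> Y") (auto simp: map_add_def)
  qed
qed

lemma Tup_add:
  assumes "r \<in> Tup Dom Y" "s \<in> Tup Dom X"
  shows "r ++ s \<in> Tup Dom (Y \<union> X)"
proof -
  have d: "dom (r ++ s) = Y \<union> X" using assms unfolding Tup_def by auto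
  have "\<forall>A\<in>Y \<union> X. the ((r ++ s) A) \<in> Dom A"
  proof
    fix A assume A: "A \<in> Y \<union> X"
    show "the ((r ++ s) A) \<in> Dom A"
    proof (cases "A \<in> X")
      case True
      then obtain y where y: "s A = Some y" using assms unfolding Tup_def by auto
      have "the (s A) \<in> Dom A" using assms True unfolding Tup_def by auto
      thus ?thesis using y by (simp add: map_add_def)
    next
      case False
      hence "s A = None" using assms unfolding Tup_def by auto
      thus ?thesis using assms False A unfolding Tup_def by (auto simp: map_add_def)
    qed
  qed
  thus ?thesis using d unfolding Tup_def by simp
qed

lemma Tup_dom: "t \<in> Tup Dom X \<Longrightarrow> dom t = X"
  unfolding Tup_def by simp




lemma fibre_sum:
  assumes "finite B" "A \<subseteq> g ` B" "inj_on g B" "\<forall>x \<in> g ` B - A. f x = 0"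
  shows "sum f A = sum (f \<circ> g) B"
proof -
  have "sum f A = sum f (g ` B)" by (rule sum.mono_neutral_left) (use assms in auto)
  also have "\<dots> = sum (f \<circ> g) B" by (rule sum.reindex[OF assms(3)])
  finally show ?thesis .
qed

lemma cfac_nz:
  fixes S :: "('a \<rightharpoonup> 'd) \<Rightarrow> 'k::positive_semiring"
  assumes "finite (supp S)"
  shows "cfac S Z u \<noteq> 0"
proof -
  have f: "finite (supp (marg S Z) - {u})" using finite_supp_marg[OF assms] by simp
  show ?thesis unfolding cfac_def by (rule prod_nz[OF f]) (simp add: supp_def)
qed

lemma join_props:
  fixes T S :: "('a \<rightharpoonup> 'd) \<Rightarrow> 'k::positive_semiring"
  assumes T: "krel Dom Y T" and S: "krel Dom X S"
    and eq: "krel_equiv (marg T (Y \<inter> X)) (marg S (Y \<inter> X))"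
  shows "krel Dom (Y \<union> X) (join Dom Y T X S)"
    and "\<exists>c. c \<noteq> 0 \<and> (\<forall>r. marg (join Dom Y T X S) Y r = c * T r)"
    and "krel_equiv S (marg (join Dom Y T X S) X)"
proof -
  define Z where "Z = Y \<inter> X"
  define J where "J = join Dom Y T X S"
  define ms where "ms = marg S Z"
  define mt where "mt = marg T Z"
  define P where "P = prod ms (supp ms)"
  have fT: "finite (supp T)" using krel_finite[OF T] .
  have fS: "finite (supp S)" using krel_finite[OF S] .
  have fms: "finite (supp ms)" unfolding ms_def using finite_supp_marg[OF fS] .
  have P0: "P \<noteq> 0" unfolding P_def by (rule prod_nz[OF fms]) (simp add: supp_def)
  have c0: "cfac S Z u \<noteq> 0" for u using cfac_nz[OF fS] .
  have cP: "ms u * cfac S Z u = P" if "u \<in> supp ms" for u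
  proof -
    have "P = ms u * prod ms (supp ms - {u})" unfolding P_def using prod.remove[OF fms that] .
    thus ?thesis unfolding cfac_def ms_def by simp
  qed
  obtain a b where ab: "a \<noteq> 0" "b \<noteq> 0" "\<forall>u. a * mt u = b * ms u"
    using eq unfolding krel_equiv_def mt_def ms_def Z_def by blast
  have Jdef: "J t = (if t \<in> Tup Dom (Y \<union> X) then T (t |` Y) * S (t |` X) * cfac S Z (t |` Z) else 0)" for t
    unfolding J_def join_def Z_def by simp
  have Jnz: "t \<in> Tup Dom (Y \<union> X) \<and> T (t |` Y) \<noteq> 0 \<and> S (t |` X) \<noteq> 0" if "J t \<noteq> 0" for t
    using that Jdef[of t] by (auto split: if_splits)
  have ZY: "Y \<inter> Z = Z" "X \<inter> Z = Z" unfolding Z_def by auto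
  have comb: "J (r ++ s) = T r * S s * cfac S Z (r |` Z)"
    and combY: "(r ++ s) |` Y = r" and combX: "(r ++ s) |` X = s"
    if r: "r \<in> Tup Dom Y" and s: "s \<in> Tup Dom X" and rs: "r |` Z = s |` Z" for r s
  proof -
    have dr: "dom r = Y" and ds: "dom s = X" using r s Tup_dom by auto
    show Y1: "(r ++ s) |` Y = r" using restrict_add_left[OF dr ds] rs unfolding Z_def by simp
    show X1: "(r ++ s) |` X = s" using restrict_add_right[OF ds] .
    have "(r ++ s) |` Z = (r ++ s) |` Y |` Z" using ZY by simp
    hence Z1: "(r ++ s) |` Z = r |` Z" using Y1 by simp
    have "r ++ s \<in> Tup Dom (Y \<union> X)" using Tup_add[OF r s] .
    thus "J (r ++ s) = T r * S s * cfac S Z (r |` Z)" using Jdef Y1 X1 Z1 by simp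
  qed
  have tZ: "t |` Y |` Z = t |` Z" "t |` X |` Z = t |` Z" for t using ZY by simp_all
  have fJ: "finite (supp J)"
  proof (rule finite_subset)
    show "supp J \<subseteq> (\<lambda>(r, s). r ++ s) ` (supp T \<times> supp S)"
    proof
      fix t assume "t \<in> supp J"
      hence nz: "t \<in> Tup Dom (Y \<union> X)" "T (t |` Y) \<noteq> 0" "S (t |` X) \<noteq> 0" using Jnz unfolding supp_def by auto
      have "t = (t |` Y) ++ (t |` X)" using merge_restrict Tup_dom[OF nz(1)] by blast
      moreover have "(t |` Y, t |` X) \<in> supp T \<times> supp S" using nz unfolding supp_def by simp
      ultimately show "t \<in> (\<lambda>(r, s). r ++ s) ` (supp T \<times> supp S)" by force
    qed
    show "finite ((\<lambda>(r, s). r ++ s) ` (supp T \<times> supp S))" using fT fS by simp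
  qed
  show "krel Dom (Y \<union> X) (join Dom Y T X S)"
    unfolding krel_def J_def[symmetric] using fJ Jdef unfolding supp_def by simp
  have margY: "marg J Y r = P * T r" for r
  proof (cases "T r = 0")
    case True
    have "{t \<in> supp J. t |` Y = r} = {}" using Jnz True unfolding supp_def by auto
    hence "marg J Y r = 0" unfolding marg_def by (simp only: sum.empty)
    thus ?thesis using True by simp
  next
    case False
    have r: "r \<in> Tup Dom Y" using krel_dom[OF T False] .
    define B where "B = {s \<in> supp S. s |` Z = r |` Z}"
    have fB: "finite B" unfolding B_def using fS by simp
    have BT: "s \<in> Tup Dom X" if "s \<in> B" for s using that krel_dom[OF S] unfolding B_def supp_def by auto
    have "marg J Y r = sum J {t \<in> supp J. t |` Y = r}" unfolding marg_def ..
    also have "\<dots> = sum (J \<circ> (\<lambda>s. r ++ s)) B"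
    proof (rule fibre_sum[OF fB])
      show "{t \<in> supp J. t |` Y = r} \<subseteq> (\<lambda>s. r ++ s) ` B"
      proof
        fix t assume t: "t \<in> {t \<in> supp J. t |` Y = r}"
        hence nz: "t \<in> Tup Dom (Y \<union> X)" "T (t |` Y) \<noteq> 0" "S (t |` X) \<noteq> 0" and tr: "t |` Y = r"
          using Jnz unfolding supp_def by auto
        have "t = (t |` Y) ++ (t |` X)" using merge_restrict Tup_dom[OF nz(1)] by blast
        hence "t = r ++ (t |` X)" using tr by simp
        moreover have "t |` X \<in> B" unfolding B_def supp_def using nz tr ZY by auto
        ultimately show "t \<in> (\<lambda>s. r ++ s) ` B" by blast
      qed
      show "inj_on (\<lambda>s. r ++ s) B"
      proof (rule inj_onI)
        fix s1 s2 assume "s1 \<in> B" "s2 \<in> B" "r ++ s1 = r ++ s2"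
        thus "s1 = s2" using combX[OF r BT] unfolding B_def by (metis (mono_tags, lifting) mem_Collect_eq)
      qed
      show "\<forall>x\<in>(\<lambda>s. r ++ s) ` B - {t \<in> supp J. t |` Y = r}. J x = 0"
      proof
        fix x assume "x \<in> (\<lambda>s. r ++ s) ` B - {t \<in> supp J. t |` Y = r}"
        then obtain s where s: "s \<in> B" "x = r ++ s" "x \<notin> {t \<in> supp J. t |` Y = r}" by blast
        have "x |` Y = r" using combY[OF r BT[OF s(1)]] s unfolding B_def by simp
        thus "J x = 0" using s(3) unfolding supp_def by simp
      qed
    qed
    also have "\<dots> = (\<Sum>s\<in>B. T r * cfac S Z (r |` Z) * S s)"
    proof (rule sum.cong[OF refl])
      fix s assume s: "s \<in> B"
      show "(J \<circ> (\<lambda>s. r ++ s)) s = T r * cfac S Z (r |` Z) * S s"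
        using comb[OF r BT[OF s]] s unfolding B_def by (simp add: mult_ac)
    qed
    also have "\<dots> = T r * cfac S Z (r |` Z) * ms (r |` Z)"
      unfolding ms_def marg_def B_def by (simp add: sum_distrib_left)
    also have "\<dots> = T r * P"
    proof -
      have "mt (r |` Z) \<noteq> 0" unfolding mt_def marg_def
        by (rule pos_sum_nz[of _ r]) (use fT False in \<open>auto simp: supp_def\<close>)
      hence "a * mt (r |` Z) \<noteq> 0" using ab mult_nz by blast
      hence "ms (r |` Z) \<noteq> 0" using ab(3) by (metis mult_zero_right)
      hence "ms (r |` Z) * cfac S Z (r |` Z) = P" using cP unfolding supp_def by simp
      thus ?thesis by (simp add: mult_ac)
    qed
    finally show ?thesis by (simp add: mult_ac)
  qed
  show "\<exists>c. c \<noteq> 0 \<and> (\<forall>r. marg (join Dom Y T X S) Y r = c * T r)"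
    using margY P0 unfolding J_def by blast
  have margX: "a * marg J X s = (b * P) * S s" for s
  proof (cases "S s = 0")
    case True
    have "{t \<in> supp J. t |` X = s} = {}" using Jnz True unfolding supp_def by auto
    hence "marg J X s = 0" unfolding marg_def by (simp only: sum.empty)
    thus ?thesis using True by simp
  next
    case False
    have s: "s \<in> Tup Dom X" using krel_dom[OF S False] .
    define B where "B = {r \<in> supp T. r |` Z = s |` Z}"
    have fB: "finite B" unfolding B_def using fT by simp
    have BT: "r \<in> Tup Dom Y" if "r \<in> B" for r using that krel_dom[OF T] unfolding B_def supp_def by auto
    have "marg J X s = sum J {t \<in> supp J. t |` X = s}" unfolding marg_def ..
    also have "\<dots> = sum (J \<circ> (\<lambda>r. r ++ s)) B"
    proof (rule fibre_sum[OF fB])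
      show "{t \<in> supp J. t |` X = s} \<subseteq> (\<lambda>r. r ++ s) ` B"
      proof
        fix t assume t: "t \<in> {t \<in> supp J. t |` X = s}"
        hence nz: "t \<in> Tup Dom (Y \<union> X)" "T (t |` Y) \<noteq> 0" "S (t |` X) \<noteq> 0" and ts: "t |` X = s"
          using Jnz unfolding supp_def by auto
        have "t = (t |` Y) ++ (t |` X)" using merge_restrict Tup_dom[OF nz(1)] by blast
        hence "t = (t |` Y) ++ s" using ts by simp
        moreover have "t |` Y \<in> B" unfolding B_def supp_def using nz ts ZY by auto
        ultimately show "t \<in> (\<lambda>r. r ++ s) ` B" by blast
      qed
      show "inj_on (\<lambda>r. r ++ s) B"
      proof (rule inj_onI)
        fix r1 r2 assume "r1 \<in> B" "r2 \<in> B" "r1 ++ s = r2 ++ s"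
        thus "r1 = r2" using combY[OF BT s] unfolding B_def by (metis (mono_tags, lifting) mem_Collect_eq)
      qed
      show "\<forall>x\<in>(\<lambda>r. r ++ s) ` B - {t \<in> supp J. t |` X = s}. J x = 0"
      proof
        fix x assume "x \<in> (\<lambda>r. r ++ s) ` B - {t \<in> supp J. t |` X = s}"
        then obtain r where r: "r \<in> B" "x = r ++ s" "x \<notin> {t \<in> supp J. t |` X = s}" by blast
        have "x |` X = s" using combX[OF BT[OF r(1)] s] r unfolding B_def by simp
        thus "J x = 0" using r(3) unfolding supp_def by simp
      qed
    qed
    also have "\<dots> = (\<Sum>r\<in>B. S s * cfac S Z (s |` Z) * T r)"
    proof (rule sum.cong[OF refl])
      fix r assume r: "r \<in> B"
      show "(J \<circ> (\<lambda>r. r ++ s)) r = S s * cfac S Z (s |` Z) * T r"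
        using comb[OF BT[OF r] s] r unfolding B_def by (simp add: mult_ac)
    qed
    also have "\<dots> = S s * cfac S Z (s |` Z) * mt (s |` Z)"
      unfolding mt_def marg_def B_def by (simp add: sum_distrib_left)
    finally have mJ: "marg J X s = S s * cfac S Z (s |` Z) * mt (s |` Z)" .
    have "ms (s |` Z) \<noteq> 0" unfolding ms_def marg_def
      by (rule pos_sum_nz[of _ s]) (use fS False in \<open>auto simp: supp_def\<close>)
    hence cP': "ms (s |` Z) * cfac S Z (s |` Z) = P" using cP unfolding supp_def by simp
    have "a * marg J X s = S s * cfac S Z (s |` Z) * (a * mt (s |` Z))" using mJ by (simp add: mult_ac)
    also have "\<dots> = S s * cfac S Z (s |` Z) * (b * ms (s |` Z))" using ab(3) by simp
    also have "\<dots> = b * S s * (ms (s |` Z) * cfac S Z (s |` Z))" by (simp add: mult_ac)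
    also have "\<dots> = (b * P) * S s" using cP' by (simp add: mult_ac)
    finally show ?thesis .
  qed
  have "b * P \<noteq> 0" using ab P0 mult_nz by blast
  thus "krel_equiv S (marg (join Dom Y T X S) X)"
    unfolding krel_equiv_def J_def[symmetric] using margX ab by metis
qed




definition rip :: "(nat \<Rightarrow> 'a set) \<Rightarrow> nat list \<Rightarrow> bool" where
  "rip e L \<longleftrightarrow> (\<forall>j<length L. 0 < j \<longrightarrow> (\<exists>k<j. e (L!j) \<inter> \<Union>(e ` set (take j L)) \<subseteq> e (L!k)))"

lemma rip_snocD:
  assumes "rip e (L @ [x])"
  shows "rip e L" and "L \<noteq> [] \<Longrightarrow> \<exists>k<length L. e x \<inter> \<Union>(e ` set L) \<subseteq> e (L!k)"
proof -
  show "rip e L" unfolding rip_def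
  proof (intro allI impI)
    fix j assume j: "j < length L" "0 < j"
    hence "\<exists>k<j. e ((L@[x])!j) \<inter> \<Union>(e ` set (take j (L@[x]))) \<subseteq> e ((L@[x])!k)"
      using assms unfolding rip_def by simp
    then obtain k where "k < j" "e ((L@[x])!j) \<inter> \<Union>(e ` set (take j (L@[x]))) \<subseteq> e ((L@[x])!k)" by blast
    moreover have "(L@[x])!j = L!j" "(L@[x])!k = L!k" "take j (L@[x]) = take j L"
      using j \<open>k < j\<close> by (auto simp: nth_append)
    ultimately show "\<exists>k<j. e (L!j) \<inter> \<Union>(e ` set (take j L)) \<subseteq> e (L!k)" by auto
  qed
  assume "L \<noteq> []"
  have h: "\<forall>j<length (L@[x]). 0<j \<longrightarrow> (\<exists>k<j. e ((L@[x])!j) \<inter> \<Union>(e ` set (take j (L@[x]))) \<subseteq> e ((L@[x])!k))"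
    using assms unfolding rip_def .
  have "length L < length (L@[x])" "0 < length L" using \<open>L \<noteq> []\<close> by auto
  note h[rule_format, OF this]
  then obtain k where "k < length L" "e ((L@[x])!length L) \<inter> \<Union>(e ` set (take (length L) (L@[x]))) \<subseteq> e ((L@[x])!k)" by blast
  moreover have "(L@[x])!length L = x" "(L@[x])!k = L!k" "take (length L) (L@[x]) = L"
    using \<open>k < length L\<close> by (auto simp: nth_append)
  ultimately show "\<exists>k<length L. e x \<inter> \<Union>(e ` set L) \<subseteq> e (L!k)" by auto
qed

lemma restrict_self_dom: "dom r = X \<Longrightarrow> r |` X = r"
  by (rule ext) (auto simp: restrict_map_def)

lemma marg_self:
  assumes "krel Dom X R" shows "marg R X = R"
proof
  fix u
  have "{r \<in> supp R. r |` X = u} = {r \<in> supp R. r = u}"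
  proof -
    have "r |` X = r" if "r \<in> supp R" for r
    proof -
      have "dom r = X" using krel_dom[OF assms] that Tup_dom unfolding supp_def by blast
      thus ?thesis using restrict_self_dom by blast
    qed
    thus ?thesis by auto
  qed
  also have "\<dots> = (if R u = 0 then {} else {u})" unfolding supp_def by auto
  finally show "marg R X u = R u" unfolding marg_def by simp
qed

lemma ljoin_aux_snoc:
  "ljoin_aux Dom Y T (ps @ [q]) = join Dom (Y \<union> \<Union>(fst ` set ps)) (ljoin_aux Dom Y T ps) (fst q) (snd q)"
proof (induction ps arbitrary: Y T)
  case Nil thus ?case by simp
next
  case (Cons p ps)
  thus ?case by (simp add: Un_assoc)
qed

lemma iter_ljoin_snoc:
  assumes "L \<noteq> []"
  shows "iter_ljoin Dom (map (\<lambda>i. (X i, R i)) (L @ [j])) =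
         join Dom (\<Union>(X ` set L)) (iter_ljoin Dom (map (\<lambda>i. (X i, R i)) L)) (X j) (R j)"
proof -
  obtain h t where L: "L = h # t" using assms by (cases L) auto
  show ?thesis unfolding iter_ljoin_def using L by (simp add: ljoin_aux_snoc image_image)
qed

lemma iter_claim:
  fixes R :: "nat \<Rightarrow> ('a \<rightharpoonup> 'd) \<Rightarrow> 'k::positive_semiring"
  assumes pc: "pairwise_consistent Dom m X R" and kr: "\<forall>i<m. krel Dom (X i) (R i)"
  shows "L \<noteq> [] \<Longrightarrow> distinct L \<Longrightarrow> set L \<subseteq> {..<m} \<Longrightarrow> rip X L \<Longrightarrow>
    krel Dom (\<Union>(X ` set L)) (iter_ljoin Dom (map (\<lambda>i. (X i, R i)) L)) \<and>
    (\<forall>i\<in>set L. krel_equiv (R i) (marg (iter_ljoin Dom (map (\<lambda>i. (X i, R i)) L)) (X i)))"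
proof (induction L rule: rev_induct)
  case Nil thus ?case by simp
next
  case (snoc j L)
  show ?case
  proof (cases "L = []")
    case True
    have "j < m" using snoc by simp
    hence "krel Dom (X j) (R j)" using kr by simp
    hence "marg (R j) (X j) = R j" using marg_self by blast
    thus ?thesis using True krel_equiv_refl \<open>krel Dom (X j) (R j)\<close> by (simp add: iter_ljoin_def)
  next
    case False
    define Y where "Y = \<Union>(X ` set L)"
    define T where "T = iter_ljoin Dom (map (\<lambda>i. (X i, R i)) L)"
    have IH: "krel Dom Y T" "\<forall>i\<in>set L. krel_equiv (R i) (marg T (X i))"
      using snoc False rip_snocD(1)[OF snoc.prems(4)] unfolding Y_def T_def by auto
    obtain k where k: "k < length L" "X j \<inter> Y \<subseteq> X (L!k)"
      using rip_snocD(2)[OF snoc.prems(4) False] unfolding Y_def by blast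
    define c where "c = L!k"
    have cL: "c \<in> set L" unfolding c_def using k by simp
    have cm: "c < m" "j < m" using snoc cL by auto
    have cj: "c \<noteq> j" using snoc cL by auto
    define Z where "Z = Y \<inter> X j"
    have Zc: "Z \<subseteq> X c" using k unfolding Z_def c_def by blast
    have cY: "X c \<subseteq> Y" unfolding Y_def using cL by blast
    have kc: "krel Dom (X c) (R c)" and kj: "krel Dom (X j) (R j)" using kr cm by auto
    have fT: "finite (supp T)" using krel_finite[OF IH(1)] .
    have e1: "krel_equiv (marg T Z) (marg (R c) Z)"
    proof -
      have "marg T Z = marg (marg T (X c)) Z" using marg_marg[OF fT Zc] by auto
      moreover have "krel_equiv (marg (marg T (X c)) Z) (marg (R c) Z)"
        by (rule krel_equiv_marg[OF krel_equiv_sym[OF IH(2)[rule_format, OF cL]]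
              finite_supp_marg[OF fT] krel_finite[OF kc]])
      ultimately show ?thesis by simp
    qed
    have e2: "krel_equiv (marg (R c) Z) (marg (R j) Z)"
    proof -
      have "consistent Dom (X c) (R c) (X j) (R j)" using pc cm cj unfolding pairwise_consistent_def by blast
      then obtain W where W: "krel Dom (X c \<union> X j) W" "krel_equiv (R c) (marg W (X c))" "krel_equiv (R j) (marg W (X j))"
        unfolding consistent_def by blast
      have fW: "finite (supp W)" using krel_finite[OF W(1)] .
      have Zj: "Z \<subseteq> X j" unfolding Z_def by blast
      have a1: "krel_equiv (marg (R c) Z) (marg (marg W (X c)) Z)"
        by (rule krel_equiv_marg[OF W(2) krel_finite[OF kc] finite_supp_marg[OF fW]])
      have a2: "krel_equiv (marg (R j) Z) (marg (marg W (X j)) Z)"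
        by (rule krel_equiv_marg[OF W(3) krel_finite[OF kj] finite_supp_marg[OF fW]])
      have "marg (marg W (X c)) Z = marg W Z" using marg_marg[OF fW Zc] by auto
      moreover have "marg (marg W (X j)) Z = marg W Z" using marg_marg[OF fW Zj] by auto
      ultimately have "krel_equiv (marg (R c) Z) (marg W Z)" "krel_equiv (marg (R j) Z) (marg W Z)" using a1 a2 by simp_all
      thus ?thesis using krel_equiv_trans krel_equiv_sym by blast
    qed
    have eq: "krel_equiv (marg T (Y \<inter> X j)) (marg (R j) (Y \<inter> X j))"
      using krel_equiv_trans[OF e1 e2] unfolding Z_def .
    note jp = join_props[OF IH(1) kj eq]
    define J where "J = join Dom Y T (X j) (R j)"
    have Jeq: "iter_ljoin Dom (map (\<lambda>i. (X i, R i)) (L @ [j])) = J"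
      unfolding J_def Y_def T_def using iter_ljoin_snoc[OF False] .
    obtain cc where cc: "cc \<noteq> 0" "\<forall>r. marg J Y r = cc * T r" using jp(2) unfolding J_def by blast
    have fJ: "finite (supp J)" using krel_finite[OF jp(1)] unfolding J_def .
    have "krel_equiv (R i) (marg J (X i))" if i: "i \<in> set L" for i
    proof -
      have iY: "X i \<subseteq> Y" unfolding Y_def using i by blast
      have "marg J (X i) = marg (marg J Y) (X i)" using marg_marg[OF fJ iY] by auto
      also have "marg J Y = (\<lambda>r. cc * T r)" using cc by auto
      finally have m1: "marg J (X i) = (\<lambda>u. cc * marg T (X i) u)" using marg_scale[OF fT] by auto
      have "krel_equiv (marg T (X i)) (marg J (X i))"
        by (rule krel_equiv_scale[OF cc(1)]) (simp add: m1)
      thus ?thesis using krel_equiv_trans IH(2) i by blast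
    qed
    moreover have "krel_equiv (R j) (marg J (X j))" using jp(3) unfolding J_def .
    moreover have "krel Dom (\<Union>(X ` set (L @ [j]))) J" using jp(1) unfolding J_def Y_def by (simp add: Un_commute)
    ultimately show ?thesis unfolding Jeq by auto
  qed
qed




lemma rip_star0:
  assumes "\<forall>j<length L. e (L!j) \<subseteq> e (L!0)"
  shows "rip e L"
  unfolding rip_def
proof (intro allI impI)
  fix j assume j: "j < length L" "0 < j"
  have "e (L!j) \<inter> \<Union>(e ` set (take j L)) \<subseteq> e (L!0)" using assms j by blast
  thus "\<exists>k<j. e (L!j) \<inter> \<Union>(e ` set (take j L)) \<subseteq> e (L!k)" using j by blast
qed

lemma rip_star1:
  assumes "\<forall>j<length L. 1 < j \<longrightarrow> e (L!j) \<subseteq> e (L!1)"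
  shows "rip e L"
  unfolding rip_def
proof (intro allI impI)
  fix j assume j: "j < length L" "0 < j"
  show "\<exists>k<j. e (L!j) \<inter> \<Union>(e ` set (take j L)) \<subseteq> e (L!k)"
  proof (cases "j = 1")
    case True
    have "take j L = [L!0]" using j True by (cases L) auto
    hence "e (L!j) \<inter> \<Union>(e ` set (take j L)) \<subseteq> e (L!0)" by simp
    thus ?thesis using j by blast
  next
    case False
    hence "1 < j" using j by simp
    hence "e (L!j) \<inter> \<Union>(e ` set (take j L)) \<subseteq> e (L!1)" using assms j by blast
    thus ?thesis using \<open>1 < j\<close> by blast
  qed
qed

lemma rip_glue:
  assumes r1: "rip (\<lambda>i. e i \<inter> U1) L1" and r2: "rip (\<lambda>i. e i \<inter> U2) (p # L2)"
    and d1: "distinct L1" and pL1: "p \<in> set L1"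
    and s1: "\<forall>i\<in>set L1. i \<noteq> p \<longrightarrow> e i \<subseteq> U1" and s2: "\<forall>i\<in>set L2. e i \<subseteq> U2"
    and S: "U1 \<inter> U2 \<subseteq> e p"
  shows "rip e (L1 @ L2)"
  unfolding rip_def
proof (intro allI impI)
  fix j assume j: "j < length (L1 @ L2)" "0 < j"
  show "\<exists>k<j. e ((L1@L2)!j) \<inter> \<Union>(e ` set (take j (L1@L2))) \<subseteq> e ((L1@L2)!k)"
  proof (cases "j < length L1")
    case True
    obtain k where k: "k<j" "e (L1!j) \<inter> U1 \<inter> \<Union>((\<lambda>i. e i \<inter> U1) ` set (take j L1)) \<subseteq> e (L1!k) \<inter> U1"
      using r1 True j unfolding rip_def by blast
    have sub: "e (L1!j) \<inter> \<Union>(e ` set (take j L1)) \<subseteq> e (L1!k)"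
    proof
      fix x assume x: "x \<in> e (L1!j) \<inter> \<Union>(e ` set (take j L1))"
      then obtain i where i: "i \<in> set (take j L1)" "x \<in> e i" by blast
      obtain i' where i': "i' < length (take j L1)" "take j L1 ! i' = i" using i(1) by (metis in_set_conv_nth)
      have i'j: "i' < j" "L1 ! i' = i" using i' True by auto
      have "i' < length L1" using i'j True by simp
      hence "L1 ! i' \<noteq> L1 ! j" using nth_eq_iff_index_eq[OF d1 _ True] i'j(1) by auto
      hence ij: "i \<noteq> L1!j" using i'j by simp
      have iL: "i \<in> set L1" using i(1) in_set_takeD by fast
      have "x \<in> U1"
      proof (cases "L1!j = p")
        case True
        hence "e i \<subseteq> U1" using s1 iL ij by blast
        thus ?thesis using i by blast
      next
        case False
        hence "e (L1!j) \<subseteq> U1" using s1 \<open>j < length L1\<close> nth_mem by blast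
        thus ?thesis using x by blast
      qed
      hence "x \<in> e (L1!j) \<inter> U1 \<inter> \<Union>((\<lambda>i. e i \<inter> U1) ` set (take j L1))" using x i by blast
      thus "x \<in> e (L1!k)" using k(2) by blast
    qed
    moreover have eqs: "(L1@L2)!j = L1!j" "(L1@L2)!k = L1!k" "take j (L1@L2) = take j L1"
      using True k by (auto simp: nth_append)
    ultimately have "e ((L1@L2)!j) \<inter> \<Union>(e ` set (take j (L1@L2))) \<subseteq> e ((L1@L2)!k)"
      unfolding eqs by blast
    thus ?thesis using k(1) by blast
  next
    case False
    define t where "t = j - length L1"
    have tl: "t < length L2" using j False unfolding t_def by auto
    have jt: "j = length L1 + t" using False unfolding t_def by auto
    have "Suc t < length (p # L2)" "0 < Suc t" using tl by auto
    then obtain k where k: "k < Suc t"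
      "e ((p#L2)!Suc t) \<inter> U2 \<inter> \<Union>((\<lambda>i. e i \<inter> U2) ` set (take (Suc t) (p#L2))) \<subseteq> e ((p#L2)!k) \<inter> U2"
      using r2 unfolding rip_def by blast
    have nj: "(L1@L2)!j = L2!t" using jt by (simp add: nth_append)
    have tk: "take j (L1@L2) = L1 @ take t L2" using jt by simp
    have ps: "(p#L2)!Suc t = L2!t" "take (Suc t) (p#L2) = p # take t L2" by simp_all
    have sub: "e (L2!t) \<inter> \<Union>(e ` set (L1 @ take t L2)) \<subseteq> e ((p#L2)!k)"
    proof
      fix x assume x: "x \<in> e (L2!t) \<inter> \<Union>(e ` set (L1 @ take t L2))"
      have "L2!t \<in> set L2" using tl by simp
      hence xU2: "x \<in> U2" using x s2 by blast
      obtain i where i: "i \<in> set L1 \<union> set (take t L2)" "x \<in> e i" using x by auto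
      have "x \<in> \<Union>((\<lambda>i. e i \<inter> U2) ` set (p # take t L2))"
      proof (cases "i \<in> set (take t L2)")
        case True thus ?thesis using i xU2 by auto
      next
        case False
        hence iL1: "i \<in> set L1" using i by auto
        show ?thesis
        proof (cases "i = p")
          case True thus ?thesis using i xU2 by auto
        next
          case False
          hence "x \<in> U1" using s1 iL1 i by blast
          hence "x \<in> e p" using S xU2 by blast
          thus ?thesis using xU2 by auto
        qed
      qed
      hence "x \<in> e ((p#L2)!Suc t) \<inter> U2 \<inter> \<Union>((\<lambda>i. e i \<inter> U2) ` set (take (Suc t) (p#L2)))"
        using x xU2 ps by auto
      thus "x \<in> e ((p#L2)!k)" using k(2) by blast
    qed
    show ?thesis
    proof (cases k)
      case 0
      obtain k' where k': "k' < length L1" "L1!k' = p" using pL1 by (metis in_set_conv_nth)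
      have "(L1@L2)!k' = p" using k' by (simp add: nth_append)
      moreover have "k' < j" using k' jt by simp
      ultimately show ?thesis using sub 0 nj tk by (intro exI[of _ k']) auto
    next
      case (Suc k'')
      have "k'' < t" using k Suc by simp
      have "(L1@L2)!(length L1 + k'') = L2!k''" by (simp add: nth_append)
      moreover have "length L1 + k'' < j" using \<open>k''<t\<close> jt by simp
      ultimately show ?thesis using sub Suc nj tk by (intro exI[of _ "length L1 + k''"]) auto
    qed
  qed
qed




lemma red_sub: "reduction F \<subseteq> F" unfolding reduction_def by auto

lemma red_above:
  assumes "finite F" "x \<in> F" shows "\<exists>y\<in>reduction F. x \<subseteq> y"
proof -
  obtain y where y: "y \<in> F" "x \<subseteq> y" "\<forall>b\<in>F. y \<subseteq> b \<longrightarrow> y = b"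
    using finite_has_maximal2[OF assms] by blast
  have "y \<in> reduction F" unfolding reduction_def using y by auto
  thus ?thesis using y by blast
qed

lemma red_eq:
  assumes "A \<subseteq> B" "\<forall>b\<in>B. \<exists>a\<in>A. b \<subseteq> a"
  shows "reduction A = reduction B"
proof
  show "reduction A \<subseteq> reduction B"
  proof
    fix x assume x: "x \<in> reduction A"
    hence xA: "x \<in> A" "\<not> (\<exists>y\<in>A. x \<subset> y)" unfolding reduction_def by auto
    have "\<not> (\<exists>y\<in>B. x \<subset> y)"
    proof
      assume "\<exists>y\<in>B. x \<subset> y"
      then obtain y a where "y \<in> B" "x \<subset> y" "a \<in> A" "y \<subseteq> a" using assms(2) by blast
      hence "x \<subset> a" by blast
      thus False using xA \<open>a \<in> A\<close> by blast
    qed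
    thus "x \<in> reduction B" unfolding reduction_def using xA assms(1) by auto
  qed
next
  show "reduction B \<subseteq> reduction A"
  proof
    fix x assume x: "x \<in> reduction B"
    hence xB: "x \<in> B" "\<not> (\<exists>y\<in>B. x \<subset> y)" unfolding reduction_def by auto
    obtain a where a: "a \<in> A" "x \<subseteq> a" using assms(2) xB by blast
    have "a \<in> B" using a assms(1) by blast
    hence "x = a" using a xB by blast
    thus "x \<in> reduction A" unfolding reduction_def using a xB assms(1) by blast
  qed
qed

lemma Union_red: "finite E \<Longrightarrow> \<Union>(reduction E) = \<Union>E"
proof
  show "\<Union>(reduction E) \<subseteq> \<Union>E" using red_sub by blast
  assume f: "finite E"
  show "\<Union>E \<subseteq> \<Union>(reduction E)"
  proof
    fix x assume "x \<in> \<Union>E"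
    then obtain X where "X \<in> E" "x \<in> X" by blast
    then obtain Y where "Y \<in> reduction E" "X \<subseteq> Y" using red_above[OF f] by blast
    thus "x \<in> \<Union>(reduction E)" using \<open>x \<in> X\<close> by blast
  qed
qed

lemma red_induced_red:
  assumes "finite E"
  shows "reduction (induced (reduction E) W) = reduction (induced E W)"
proof (rule red_eq)
  show "induced (reduction E) W \<subseteq> induced E W" unfolding induced_def using red_sub by blast
  show "\<forall>b\<in>induced E W. \<exists>a\<in>induced (reduction E) W. b \<subseteq> a"
  proof
    fix b assume "b \<in> induced E W"
    then obtain X where X: "X \<in> E" "b = X \<inter> W" "b \<noteq> {}" unfolding induced_def by blast
    then obtain Y where Y: "Y \<in> reduction E" "X \<subseteq> Y" using red_above[OF assms] by blast
    have "Y \<inter> W \<in> induced (reduction E) W" unfolding induced_def using Y X by blast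
    moreover have "b \<subseteq> Y \<inter> W" using X Y by blast
    ultimately show "\<exists>a\<in>induced (reduction E) W. b \<subseteq> a" by blast
  qed
qed

definition cls :: "'a set set \<Rightarrow> 'a \<Rightarrow> 'a set" where
  "cls F v = (hg_adj F)\<^sup>+ `` {v}"

lemma adj_sym: "sym (hg_adj F)" unfolding hg_adj_def sym_def by auto

lemma cls_self: "v \<in> \<Union>F \<Longrightarrow> v \<in> cls F v"
proof -
  assume "v \<in> \<Union>F"
  hence "(v, v) \<in> hg_adj F" unfolding hg_adj_def by auto
  hence "(v, v) \<in> (hg_adj F)\<^sup>+" by (rule r_into_trancl)
  thus ?thesis unfolding cls_def by simp
qed

lemma cls_sub: "cls F v \<subseteq> \<Union>F"
proof
  fix z assume "z \<in> cls F v"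
  hence "(v, z) \<in> (hg_adj F)\<^sup>+" unfolding cls_def by simp
  hence "z \<in> Range ((hg_adj F)\<^sup>+)" by (rule RangeI)
  hence "z \<in> Range (hg_adj F)" by simp
  then obtain c where "(c, z) \<in> hg_adj F" by blast
  thus "z \<in> \<Union>F" unfolding hg_adj_def by auto
qed

lemma edge_cls: "f \<in> F \<Longrightarrow> y \<in> f \<Longrightarrow> y \<in> cls F v \<Longrightarrow> f \<subseteq> cls F v"
proof
  fix z assume f: "f \<in> F" "y \<in> f" "y \<in> cls F v" and z: "z \<in> f"
  have "(y, z) \<in> hg_adj F" unfolding hg_adj_def using f z by auto
  moreover have "(v, y) \<in> (hg_adj F)\<^sup>+" using f unfolding cls_def by simp
  ultimately have "(v, z) \<in> (hg_adj F)\<^sup>+" using trancl_into_trancl[of v y "hg_adj F" z] by blast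
  thus "z \<in> cls F v" unfolding cls_def by simp
qed

lemma edge_cls_or: "f \<in> F \<Longrightarrow> f \<subseteq> cls F v \<or> f \<inter> cls F v = {}"
proof (cases "f \<inter> cls F v = {}")
  case False
  then obtain y where "y \<in> f" "y \<in> cls F v" by blast
  moreover assume "f \<in> F"
  ultimately show ?thesis using edge_cls[of f F y v] by simp
qed simp

lemma quot_image: "A // r = (\<lambda>x. r `` {x}) ` A"
  unfolding quotient_def by auto

lemma other_class:
  assumes v: "v \<in> \<Union>F" and nc: "num_components F > 1"
  shows "\<exists>y\<in>\<Union>F. y \<notin> cls F v"
proof (rule ccontr)
  assume "\<not> ?thesis"
  hence all: "\<forall>y\<in>\<Union>F. (v, y) \<in> (hg_adj F)\<^sup>+" unfolding cls_def by auto
  have symR: "sym ((hg_adj F)\<^sup>+)" using sym_trancl[OF adj_sym] .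
  have "(\<lambda>x. (hg_adj F)\<^sup>+ `` {x}) ` \<Union>F = {(hg_adj F)\<^sup>+ `` {v}}"
  proof
    show "(\<lambda>x. (hg_adj F)\<^sup>+ `` {x}) ` \<Union>F \<subseteq> {(hg_adj F)\<^sup>+ `` {v}}"
    proof
      fix C assume "C \<in> (\<lambda>x. (hg_adj F)\<^sup>+ `` {x}) ` \<Union>F"
      then obtain x where x: "x \<in> \<Union>F" "C = (hg_adj F)\<^sup>+ `` {x}" by blast
      have vx: "(v, x) \<in> (hg_adj F)\<^sup>+" using all x by blast
      hence xv: "(x, v) \<in> (hg_adj F)\<^sup>+" using symR unfolding sym_def by blast
      have "(hg_adj F)\<^sup>+ `` {x} = (hg_adj F)\<^sup>+ `` {v}"
      proof
        show "(hg_adj F)\<^sup>+ `` {x} \<subseteq> (hg_adj F)\<^sup>+ `` {v}"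
        proof
          fix z assume "z \<in> (hg_adj F)\<^sup>+ `` {x}"
          hence "(x, z) \<in> (hg_adj F)\<^sup>+" by simp
          hence "(v, z) \<in> (hg_adj F)\<^sup>+" using trancl_trans[OF vx] by blast
          thus "z \<in> (hg_adj F)\<^sup>+ `` {v}" by simp
        qed
        show "(hg_adj F)\<^sup>+ `` {v} \<subseteq> (hg_adj F)\<^sup>+ `` {x}"
        proof
          fix z assume "z \<in> (hg_adj F)\<^sup>+ `` {v}"
          hence "(v, z) \<in> (hg_adj F)\<^sup>+" by simp
          hence "(x, z) \<in> (hg_adj F)\<^sup>+" using trancl_trans[OF xv] by blast
          thus "z \<in> (hg_adj F)\<^sup>+ `` {x}" by simp
        qed
      qed
      thus "C \<in> {(hg_adj F)\<^sup>+ `` {v}}" using x by simp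
    qed
    show "{(hg_adj F)\<^sup>+ `` {v}} \<subseteq> (\<lambda>x. (hg_adj F)\<^sup>+ `` {x}) ` \<Union>F" using v by blast
  qed
  hence "num_components F = 1" unfolding num_components_def quot_image by simp
  thus False using nc by simp
qed

lemma nc_pos:
  assumes "finite (\<Union>F)" "v \<in> \<Union>F" shows "num_components F \<ge> 1"
proof -
  have "finite ((\<Union>F) // (hg_adj F)\<^sup>+)" unfolding quot_image using assms by simp
  moreover have "(\<Union>F) // (hg_adj F)\<^sup>+ \<noteq> {}" unfolding quot_image using assms(2) by blast
  ultimately show ?thesis unfolding num_components_def by (simp add: Suc_leI card_gt_0_iff)
qed




definition covers :: "nat \<Rightarrow> (nat \<Rightarrow> 'a set) \<Rightarrow> 'a set \<Rightarrow> nat set \<Rightarrow> bool" where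
  "covers m X W I \<longleftrightarrow> (\<forall>i<m. \<exists>j\<in>I. X i \<inter> W \<subseteq> X j \<inter> W)"

definition good :: "(nat \<Rightarrow> 'a set) \<Rightarrow> 'a set \<Rightarrow> nat set \<Rightarrow> nat \<Rightarrow> bool" where
  "good X W I r \<longleftrightarrow> (\<exists>L. distinct L \<and> set L = I \<and> L \<noteq> [] \<and> hd L = r \<and> rip (\<lambda>i. X i \<inter> W) L)"

lemma rip_restrict:
  assumes "W1 \<subseteq> W" shows "(\<lambda>i. X i \<inter> W \<inter> W1) = (\<lambda>i. X i \<inter> W1)"
  using assms by auto

lemma glue_step:
  assumes IH: "\<And>W' I' r'. card W' < card W \<Longrightarrow> W' \<subseteq> W \<Longrightarrow> I' \<subseteq> {..<m} \<Longrightarrow> covers m X W' I' \<Longrightarrow> r' \<in> I' \<Longrightarrow> good X W' I' r'"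
    and W1: "W1 \<subseteq> W" "card W1 < card W" and W2: "W2 \<subseteq> W" "card W2 < card W"
    and p: "p \<in> I" "X p \<inter> W \<subseteq> W1" "W1 \<inter> W2 \<subseteq> X p \<inter> W"
    and split: "\<forall>i<m. X i \<inter> W \<subseteq> W1 \<or> X i \<inter> W \<subseteq> W2"
    and I: "I \<subseteq> {..<m}" "covers m X W I" "r \<in> I"
  shows "good X W I r"
proof -
  define e where "e = (\<lambda>i. X i \<inter> W)"
  define I1 where "I1 = {i\<in>I. e i \<subseteq> W1}"
  define I2 where "I2 = {i\<in>I. \<not> e i \<subseteq> W1} \<union> {p}"
  have pI1: "p \<in> I1" unfolding I1_def e_def using p by simp
  have pI2: "p \<in> I2" unfolding I2_def by simp
  have I1I: "I1 \<subseteq> {..<m}" "I2 \<subseteq> {..<m}" using I(1) p(1) unfolding I1_def I2_def by auto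
  have I12: "I1 \<inter> I2 = {p}" unfolding I1_def I2_def using pI1 unfolding I1_def by auto
  have I12u: "I1 \<union> I2 = I" unfolding I1_def I2_def using p(1) by auto
  have eW1: "X i \<inter> W1 = e i \<inter> W1" for i unfolding e_def using W1 by auto
  have eW2: "X i \<inter> W2 = e i \<inter> W2" for i unfolding e_def using W2 by auto
  have Sp: "W1 \<inter> W2 \<subseteq> e p" using p unfolding e_def by simp
  have cov1: "covers m X W1 I1" unfolding covers_def
  proof (intro allI impI)
    fix i assume "i < m"
    then obtain j where j: "j \<in> I" "e i \<subseteq> e j" using I(2) unfolding covers_def e_def by blast
    show "\<exists>j\<in>I1. X i \<inter> W1 \<subseteq> X j \<inter> W1"
    proof (cases "e j \<subseteq> W1")
      case True
      hence "j \<in> I1" unfolding I1_def using j by simp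
      thus ?thesis using j eW1 by blast
    next
      case False
      have "j < m" using j I(1) by auto
      hence "e j \<subseteq> W2" using split False unfolding e_def by blast
      hence "X i \<inter> W1 \<subseteq> X p \<inter> W1" using j Sp eW1 by blast
      thus ?thesis using pI1 by blast
    qed
  qed
  have cov2: "covers m X W2 I2" unfolding covers_def
  proof (intro allI impI)
    fix i assume "i < m"
    then obtain j where j: "j \<in> I" "e i \<subseteq> e j" using I(2) unfolding covers_def e_def by blast
    show "\<exists>j\<in>I2. X i \<inter> W2 \<subseteq> X j \<inter> W2"
    proof (cases "e j \<subseteq> W1")
      case False
      hence "j \<in> I2" unfolding I2_def using j by simp
      thus ?thesis using j eW2 by blast
    next
      case True
      hence "X i \<inter> W2 \<subseteq> X p \<inter> W2" using j Sp eW2 by blast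
      thus ?thesis using pI2 by blast
    qed
  qed
  have in1: "e i \<subseteq> W1" if "i \<in> I1" for i using that unfolding I1_def by simp
  have in2: "e i \<subseteq> W2" if "i \<in> I2" "i \<noteq> p" for i
  proof -
    have "i \<in> I" "\<not> e i \<subseteq> W1" using that unfolding I2_def by auto
    moreover have "i < m" using \<open>i \<in> I\<close> I(1) by auto
    ultimately show ?thesis using split unfolding e_def by blast
  qed
  have r1: "rip (\<lambda>i. e i \<inter> W1) = rip (\<lambda>i. X i \<inter> W1)" using eW1 by presburger
  have r2: "rip (\<lambda>i. e i \<inter> W2) = rip (\<lambda>i. X i \<inter> W2)" using eW2 by presburger
  show ?thesis
  proof (cases "r \<in> I1")
    case True
    obtain L1 where L1: "distinct L1" "set L1 = I1" "L1 \<noteq> []" "hd L1 = r" "rip (\<lambda>i. X i \<inter> W1) L1"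
      using IH[OF W1(2) W1(1) I1I(1) cov1 True] unfolding good_def by blast
    obtain L2' where L2': "distinct L2'" "set L2' = I2" "L2' \<noteq> []" "hd L2' = p" "rip (\<lambda>i. X i \<inter> W2) L2'"
      using IH[OF W2(2) W2(1) I1I(2) cov2 pI2] unfolding good_def by blast
    obtain L2 where L2eq: "L2' = p # L2" using L2'(3,4) by (cases L2') auto
    have sL2: "set L2 = I2 - {p}" using L2' L2eq by auto
    have "rip e (L1 @ L2)"
    proof (rule rip_glue[of e W1 L1 W2 p L2])
      show "rip (\<lambda>i. e i \<inter> W1) L1" using L1(5) r1 by simp
      show "rip (\<lambda>i. e i \<inter> W2) (p # L2)" using L2'(5) r2 L2eq by simp
      show "distinct L1" using L1 by simp
      show "p \<in> set L1" using L1 pI1 by simp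
      show "\<forall>i\<in>set L1. i \<noteq> p \<longrightarrow> e i \<subseteq> W1" using L1(2) in1 by blast
      show "\<forall>i\<in>set L2. e i \<subseteq> W2" using sL2 in2 by blast
      show "W1 \<inter> W2 \<subseteq> e p" using Sp .
    qed
    moreover have "distinct (L1 @ L2)" using L1(1) L2'(1) L2eq sL2 L1(2) I12 by auto
    moreover have "set (L1 @ L2) = I" using L1(2) sL2 I12u pI1 by auto
    moreover have "hd (L1 @ L2) = r" using L1 by simp
    ultimately show ?thesis unfolding good_def e_def using L1(3) by (intro exI[of _ "L1 @ L2"]) simp
  next
    case False
    hence rI2: "r \<in> I2" using I(3) I12u by blast
    have rp: "r \<noteq> p" using False pI1 by blast
    obtain L1 where L1: "distinct L1" "set L1 = I2" "L1 \<noteq> []" "hd L1 = r" "rip (\<lambda>i. X i \<inter> W2) L1"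
      using IH[OF W2(2) W2(1) I1I(2) cov2 rI2] unfolding good_def by blast
    obtain L2' where L2': "distinct L2'" "set L2' = I1" "L2' \<noteq> []" "hd L2' = p" "rip (\<lambda>i. X i \<inter> W1) L2'"
      using IH[OF W1(2) W1(1) I1I(1) cov1 pI1] unfolding good_def by blast
    obtain L2 where L2eq: "L2' = p # L2" using L2'(3,4) by (cases L2') auto
    have sL2: "set L2 = I1 - {p}" using L2' L2eq by auto
    have "rip e (L1 @ L2)"
    proof (rule rip_glue[of e W2 L1 W1 p L2])
      show "rip (\<lambda>i. e i \<inter> W2) L1" using L1(5) r2 by simp
      show "rip (\<lambda>i. e i \<inter> W1) (p # L2)" using L2'(5) r1 L2eq by simp
      show "distinct L1" using L1 by simp
      show "p \<in> set L1" using L1 pI2 by simp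
      show "\<forall>i\<in>set L1. i \<noteq> p \<longrightarrow> e i \<subseteq> W2" using L1(2) in2 by blast
      show "\<forall>i\<in>set L2. e i \<subseteq> W1" using sL2 in1 by blast
      show "W2 \<inter> W1 \<subseteq> e p" using Sp by blast
    qed
    moreover have "distinct (L1 @ L2)" using L1(1) L2'(1) L2eq sL2 L1(2) I12 by auto
    moreover have "set (L1 @ L2) = I" using L1(2) sL2 I12u pI2 by auto
    moreover have "hd (L1 @ L2) = r" using L1 by simp
    ultimately show ?thesis unfolding good_def e_def using L1(3) by (intro exI[of _ "L1 @ L2"]) simp
  qed
qed




lemma graph_rip:
  fixes X :: "nat \<Rightarrow> 'a set"
  assumes fin: "\<forall>i<m. finite (X i)" and ac: "hg_acyclic (X ` {..<m})"
  shows "W \<subseteq> \<Union>(X ` {..<m}) \<Longrightarrow> I \<subseteq> {..<m} \<Longrightarrow> covers m X W I \<Longrightarrow> r \<in> I \<Longrightarrow> good X W I r"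
proof (induction "card W" arbitrary: W I r rule: less_induct)
  case less
  define E where "E = X ` {..<m}"
  define G where "G = reduction (induced E W)"
  have fE: "finite E" unfolding E_def by simp
  have fV: "finite (\<Union>E)" unfolding E_def using fin by auto
  have WV: "W \<subseteq> \<Union>E" using less.prems(1) unfolding E_def .
  have fW: "finite W" using finite_subset[OF WV fV] .
  have fInd: "finite (induced E W)" unfolding induced_def using fE by simp
  have GI: "G \<subseteq> induced E W" unfolding G_def using red_sub .
  have fG: "finite G" using finite_subset[OF GI fInd] .
  have fI: "finite I" using less.prems(2) finite_subset by blast
  have ind_mem: "X i \<inter> W \<in> induced E W" if "i < m" "X i \<inter> W \<noteq> {}" for i
    unfolding induced_def E_def using that by blast
  have ind_form: "\<exists>i<m. g = X i \<inter> W \<and> g \<noteq> {}" if "g \<in> induced E W" for g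
    using that unfolding induced_def E_def by blast
  have above: "\<exists>g\<in>G. X i \<inter> W \<subseteq> g" if "i < m" "X i \<inter> W \<noteq> {}" for i
    unfolding G_def using red_above[OF fInd ind_mem[OF that]] .
  have maxcov: "\<exists>p\<in>I. X p \<inter> W = g" if g: "g \<in> G" for g
  proof -
    obtain i where i: "i < m" "g = X i \<inter> W" "g \<noteq> {}" using ind_form GI g by blast
    then obtain p where p: "p \<in> I" "X i \<inter> W \<subseteq> X p \<inter> W" using less.prems(3) unfolding covers_def by blast
    have pm: "p < m" using p less.prems(2) by auto
    have "X p \<inter> W \<in> induced E W" using ind_mem[OF pm] p i by blast
    moreover have "\<not> (\<exists>y\<in>induced E W. g \<subset> y)" using g unfolding G_def reduction_def by blast
    ultimately have "X p \<inter> W = g" using p i by blast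
    thus ?thesis using p by blast
  qed
  have UG: "\<Union>G \<subseteq> W" using GI unfolding induced_def by blast
  have Gne: "g \<noteq> {}" if "g \<in> G" for g using that GI unfolding induced_def by blast
  have IH: "good X W' I' r'" if "card W' < card W" "W' \<subseteq> W" "I' \<subseteq> {..<m}" "covers m X W' I'" "r' \<in> I'" for W' I' r'
    using less.hyps[OF that(1) _ that(3-5)] that(2) less.prems(1) by blast
  consider (small) "card G \<le> 1" | (disc) "card G > 1" "\<not> hg_connected G" | (conn) "card G > 1" "hg_connected G"
    by linarith
  then show ?case
  proof cases
    case small
    obtain c where c: "c \<in> I" "\<forall>i<m. X i \<inter> W \<subseteq> X c \<inter> W"
    proof (cases "G = {}")
      case True
      have "\<forall>i<m. X i \<inter> W = {}"
      proof (intro allI impI)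
        fix i assume "i < m"
        show "X i \<inter> W = {}"
        proof (rule ccontr)
          assume "X i \<inter> W \<noteq> {}"
          thus False using above[OF \<open>i < m\<close>] True by blast
        qed
      qed
      thus ?thesis using that less.prems(4) by blast
    next
      case False
      then obtain g where g: "g \<in> G" by blast
      have "card G \<le> Suc 0" using small by simp
      hence "\<forall>a\<in>G. \<forall>b\<in>G. a = b" using card_le_Suc0_iff_eq[OF fG] by blast
      hence Gg: "\<forall>g'\<in>G. g' = g" using g by blast
      obtain p where p: "p \<in> I" "X p \<inter> W = g" using maxcov g by blast
      have "\<forall>i<m. X i \<inter> W \<subseteq> X p \<inter> W"
      proof (intro allI impI)
        fix i assume i: "i < m"
        show "X i \<inter> W \<subseteq> X p \<inter> W"
        proof (cases "X i \<inter> W = {}")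
          case False
          then obtain g' where "g' \<in> G" "X i \<inter> W \<subseteq> g'" using above[OF i] by blast
          thus ?thesis using Gg p by blast
        qed simp
      qed
      thus ?thesis using that p by blast
    qed
    show ?thesis
    proof (cases "c = r")
      case True
      define L where "L = r # sorted_list_of_set (I - {r})"
      have d: "distinct L" unfolding L_def using fI by simp
      have s: "set L = I" unfolding L_def using fI less.prems(4) by auto
      have "rip (\<lambda>i. X i \<inter> W) L"
      proof (rule rip_star0, intro allI impI)
        fix j assume "j < length L"
        hence "L!j \<in> I" using s nth_mem by blast
        hence "L!j < m" using less.prems(2) by auto
        thus "X (L!j) \<inter> W \<subseteq> X (L!0) \<inter> W" using c True unfolding L_def by simp
      qed
      moreover have "L \<noteq> []" "hd L = r" unfolding L_def by simp_all
      ultimately show ?thesis unfolding good_def using d s by blast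
    next
      case False
      define L where "L = r # c # sorted_list_of_set (I - {r, c})"
      have d: "distinct L" unfolding L_def using fI False by simp
      have s: "set L = I" unfolding L_def using fI less.prems(4) c by auto
      have "rip (\<lambda>i. X i \<inter> W) L"
      proof (rule rip_star1, intro allI impI)
        fix j assume "j < length L" "1 < j"
        hence "L!j \<in> I" using s nth_mem by blast
        hence "L!j < m" using less.prems(2) by auto
        thus "X (L!j) \<inter> W \<subseteq> X (L!1) \<inter> W" using c unfolding L_def by simp
      qed
      moreover have "L \<noteq> []" "hd L = r" unfolding L_def by simp_all
      ultimately show ?thesis unfolding good_def using d s by blast
    qed
  next
    case disc
    have "G \<noteq> {}" using disc(1) by auto
    then obtain g0 where g0: "g0 \<in> G" by blast
    obtain v where v: "v \<in> g0" using Gne[OF g0] by blast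
    have vU: "v \<in> \<Union>G" using g0 v by blast
    have fUG: "finite (\<Union>G)" using finite_subset[OF UG fW] .
    have "num_components G \<ge> 1" using nc_pos[OF fUG vU] .
    hence nc: "num_components G > 1" using disc(2) unfolding hg_connected_def by simp
    obtain y where y: "y \<in> \<Union>G" "y \<notin> cls G v" using other_class[OF vU nc] by blast
    define W1 where "W1 = cls G v"
    define W2 where "W2 = \<Union>G - cls G v"
    obtain p where p: "p \<in> I" "X p \<inter> W = g0" using maxcov g0 by blast
    have vW1: "v \<in> W1" unfolding W1_def using cls_self[OF vU] .
    have W1W: "W1 \<subseteq> W" unfolding W1_def using order_trans[OF cls_sub[of G v] UG] .
    have W2W: "W2 \<subseteq> W" unfolding W2_def using UG by blast
    show ?thesis
    proof (rule glue_step[OF IH W1W _ W2W _ p(1)])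
      have "y \<in> W" using y(1) UG by blast
      moreover have "y \<notin> W1" using y(2) unfolding W1_def by simp
      ultimately have "W1 \<subset> W" using W1W by blast
      thus "card W1 < card W" using psubset_card_mono[OF fW] by blast
      have "v \<in> W" using vU UG by blast
      moreover have "v \<notin> W2" using vW1 unfolding W2_def W1_def by simp
      ultimately have "W2 \<subset> W" using W2W by blast
      thus "card W2 < card W" using psubset_card_mono[OF fW] by blast
      show "X p \<inter> W \<subseteq> W1" unfolding W1_def p(2) using edge_cls[OF g0 v cls_self[OF vU]] .
      show "W1 \<inter> W2 \<subseteq> X p \<inter> W" unfolding W1_def W2_def by blast
      show "\<forall>i<m. X i \<inter> W \<subseteq> W1 \<or> X i \<inter> W \<subseteq> W2"
      proof (intro allI impI)
        fix i assume i: "i < m"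
        show "X i \<inter> W \<subseteq> W1 \<or> X i \<inter> W \<subseteq> W2"
        proof (cases "X i \<inter> W = {}")
          case False
          then obtain g where g: "g \<in> G" "X i \<inter> W \<subseteq> g" using above[OF i] by blast
          have gG: "g \<subseteq> \<Union>G" using g(1) by blast
          have "g \<subseteq> cls G v \<or> g \<inter> cls G v = {}" using edge_cls_or[OF g(1)] .
          thus ?thesis
          proof (elim disjE)
            assume "g \<subseteq> cls G v"
            hence "X i \<inter> W \<subseteq> W1" using g(2) unfolding W1_def by blast
            thus ?thesis ..
          next
            assume "g \<inter> cls G v = {}"
            hence "X i \<inter> W \<subseteq> W2" using g(2) gG unfolding W2_def by blast
            thus ?thesis ..
          qed
        qed simp
      qed
      show "I \<subseteq> {..<m}" using less.prems(2) .
      show "covers m X W I" using less.prems(3) .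
      show "r \<in> I" using less.prems(4) .
    qed
  next
    case conn
    have WV': "W \<subseteq> \<Union>(reduction E)" using WV Union_red[OF fE] by simp
    have GG: "reduction (induced (reduction E) W) = G" unfolding G_def using red_induced_red[OF fE] .
    have "acyclic_reduced (reduction E)" using ac unfolding hg_acyclic_def E_def .
    hence "hg_connected (reduction (induced (reduction E) W)) \<and> card (reduction (induced (reduction E) W)) > 1
       \<longrightarrow> (\<exists>S. articulation_set (reduction (induced (reduction E) W)) S)"
      using WV' unfolding acyclic_reduced_def by blast
    hence "\<exists>S. articulation_set G S" using conn unfolding GG by blast
    then obtain S where S: "articulation_set G S" by blast
    then obtain P Q where PQ: "P \<in> G" "Q \<in> G" "P \<noteq> Q" "P \<inter> Q \<noteq> {}" "S = P \<inter> Q"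
      and ncs: "num_components (reduction (induced G (\<Union>G - S))) > num_components G"
      unfolding articulation_set_def by blast
    define U where "U = \<Union>G - S"
    define G' where "G' = reduction (induced G U)"
    have nc: "num_components G' > 1" using ncs conn unfolding G'_def U_def hg_connected_def by simp
    have fIG: "finite (induced G U)" unfolding induced_def using fG by simp
    have G'I: "G' \<subseteq> induced G U" unfolding G'_def using red_sub .
    have UG': "\<Union>G' \<subseteq> U" using G'I unfolding induced_def by blast
    have PS: "P - S \<noteq> {}"
    proof
      assume "P - S = {}"
      hence "P \<subset> Q" using PQ by blast
      moreover have "Q \<in> induced E W" using PQ GI by blast
      ultimately show False using PQ(1) unfolding G_def reduction_def by blast
    qed
    have PU: "P - S \<in> induced G U"
    proof -
      have "P \<inter> U = P - S" unfolding U_def using PQ(1) by blast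
      thus ?thesis unfolding induced_def using PQ(1) PS by blast
    qed
    obtain f where f: "f \<in> G'" "P - S \<subseteq> f" using red_above[OF fIG PU] unfolding G'_def by blast
    obtain v where v: "v \<in> P - S" using PS by blast
    have vU: "v \<in> \<Union>G'" using f v by blast
    obtain y where y: "y \<in> \<Union>G'" "y \<notin> cls G' v" using other_class[OF vU nc] by blast
    define C where "C = cls G' v"
    have CU: "C \<subseteq> U" unfolding C_def using order_trans[OF cls_sub[of G' v] UG'] .
    have vC: "v \<in> C" unfolding C_def using cls_self[OF vU] .
    have "v \<in> f" using f v by blast
    hence fC: "f \<subseteq> C" unfolding C_def using edge_cls[OF f(1) _ cls_self[OF vU]] by blast
    define W1 where "W1 = C \<union> S"
    define W2 where "W2 = (U - C) \<union> S"
    obtain p where p: "p \<in> I" "X p \<inter> W = P" using maxcov PQ(1) by blast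
    have SP: "S \<subseteq> P" using PQ by blast
    have PW: "P \<subseteq> W" using PQ(1) UG by blast
    have UW: "U \<subseteq> W" unfolding U_def using UG by blast
    have W1W: "W1 \<subseteq> W" unfolding W1_def using CU UW SP PW by blast
    have W2W: "W2 \<subseteq> W" unfolding W2_def using UW SP PW by blast
    have SU: "S \<inter> U = {}" unfolding U_def by blast
    show ?thesis
    proof (rule glue_step[OF IH W1W _ W2W _ p(1)])
      have yU: "y \<in> U" using y(1) UG' by blast
      hence "y \<in> W" using UW by blast
      moreover have "y \<notin> S" using yU SU by blast
      hence "y \<notin> W1" using y(2) unfolding W1_def C_def by simp
      ultimately have "W1 \<subset> W" using W1W by blast
      thus "card W1 < card W" using psubset_card_mono[OF fW] by blast
      have "v \<in> W" using v PW by blast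
      moreover have "v \<notin> W2" using vC v unfolding W2_def by blast
      ultimately have "W2 \<subset> W" using W2W by blast
      thus "card W2 < card W" using psubset_card_mono[OF fW] by blast
      show "X p \<inter> W \<subseteq> W1" unfolding p(2) W1_def using f fC by blast
      show "W1 \<inter> W2 \<subseteq> X p \<inter> W" unfolding p(2) W1_def W2_def using SP CU by blast
      show "\<forall>i<m. X i \<inter> W \<subseteq> W1 \<or> X i \<inter> W \<subseteq> W2"
      proof (intro allI impI)
        fix i assume i: "i < m"
        show "X i \<inter> W \<subseteq> W1 \<or> X i \<inter> W \<subseteq> W2"
        proof (cases "X i \<inter> W = {}")
          case False
          then obtain g where g: "g \<in> G" "X i \<inter> W \<subseteq> g" using above[OF i] by blast
          show ?thesis
          proof (cases "g - S = {}")
            case True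
            thus ?thesis using g unfolding W1_def by blast
          next
            case False
            have "g \<inter> U = g - S" unfolding U_def using g(1) by blast
            hence "g - S \<in> induced G U" unfolding induced_def using g(1) False by blast
            then obtain f' where f': "f' \<in> G'" "g - S \<subseteq> f'" using red_above[OF fIG] unfolding G'_def by blast
            have "f' \<subseteq> C \<or> f' \<inter> C = {}" unfolding C_def using edge_cls_or[OF f'(1)] .
            moreover have "f' \<subseteq> U" using f' UG' by blast
            moreover have "X i \<inter> W \<subseteq> (g - S) \<union> S" using g by blast
            ultimately show ?thesis
            proof (elim disjE)
              assume "f' \<subseteq> C"
              hence "X i \<inter> W \<subseteq> W1" using f'(2) g(2) unfolding W1_def by blast
              thus ?thesis ..
            next
              assume "f' \<inter> C = {}" "f' \<subseteq> U"
              hence "X i \<inter> W \<subseteq> W2" using f'(2) g(2) unfolding W2_def by blast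
              thus ?thesis ..
            qed
          qed
        qed simp
      qed
      show "I \<subseteq> {..<m}" using less.prems(2) .
      show "covers m X W I" using less.prems(3) .
      show "r \<in> I" using less.prems(4) .
    qed
  qed
qed




lemma rip_cong:
  assumes "\<forall>i\<in>set L. e i = e' i" shows "rip e L = rip e' L"
proof -
  have "(e (L!j) \<inter> \<Union>(e ` set (take j L)) \<subseteq> e (L!k)) = (e' (L!j) \<inter> \<Union>(e' ` set (take j L)) \<subseteq> e' (L!k))"
    if "j < length L" "k < j" for j k
  proof -
    have "e (L!j) = e' (L!j)" "e (L!k) = e' (L!k)" using assms that by auto
    moreover have "e ` set (take j L) = e' ` set (take j L)"
      using assms by (auto intro!: image_cong dest: in_set_takeD)
    ultimately show ?thesis by simp
  qed
  note eq = this
  show ?thesis unfolding rip_def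
  proof (intro iffI allI impI)
    fix j assume H: "\<forall>j<length L. 0 < j \<longrightarrow> (\<exists>k<j. e (L!j) \<inter> \<Union>(e ` set (take j L)) \<subseteq> e (L!k))"
      and j: "j < length L" "0 < j"
    then obtain k where k: "k < j" "e (L!j) \<inter> \<Union>(e ` set (take j L)) \<subseteq> e (L!k)" by blast
    thus "\<exists>k<j. e' (L!j) \<inter> \<Union>(e' ` set (take j L)) \<subseteq> e' (L!k)" using eq[OF j(1) k(1)] by blast
  next
    fix j assume H: "\<forall>j<length L. 0 < j \<longrightarrow> (\<exists>k<j. e' (L!j) \<inter> \<Union>(e' ` set (take j L)) \<subseteq> e' (L!k))"
      and j: "j < length L" "0 < j"
    then obtain k where k: "k < j" "e' (L!j) \<inter> \<Union>(e' ` set (take j L)) \<subseteq> e' (L!k)" by blast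
    thus "\<exists>k<j. e (L!j) \<inter> \<Union>(e ` set (take j L)) \<subseteq> e (L!k)" using eq[OF j(1) k(1)] by blast
  qed
qed

theorem lemma12:
  fixes X :: "nat \<Rightarrow> 'a set" and m :: nat
  assumes "m \<ge> 1"
    and "\<forall>i<m. finite (X i)"
    and "hg_acyclic (X ` {..<m})"
  shows "\<exists>\<pi>. \<pi> permutes {..<m} \<and>
           (\<forall>(Dom :: 'a \<Rightarrow> 'd set) (R :: nat \<Rightarrow> ('a \<rightharpoonup> 'd) \<Rightarrow> 'k::positive_semiring).
              (\<forall>i<m. krel Dom (X i) (R i)) \<and> pairwise_consistent Dom m X R \<longrightarrow>
                globally_consistent Dom m X R \<and>
                global_witness Dom m X R
                  (iter_ljoin Dom (map (\<lambda>i. (X (\<pi> i), R (\<pi> i))) [0..<m])))"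
proof -
  define V where "V = \<Union>(X ` {..<m})"
  have cov: "covers m X V {..<m}" unfolding covers_def by blast
  have "good X V {..<m} 0"
    by (rule graph_rip[OF assms(2) assms(3)]) (use cov assms(1) in \<open>auto simp: V_def\<close>)
  then obtain L where L: "distinct L" "set L = {..<m}" "L \<noteq> []" "hd L = 0" "rip (\<lambda>i. X i \<inter> V) L"
    unfolding good_def by blast
  have "\<forall>i\<in>set L. X i \<inter> V = X i" using L(2) unfolding V_def by auto
  hence "rip (\<lambda>i. X i \<inter> V) L = rip X L" by (rule rip_cong)
  hence ripL: "rip X L" using L(5) by simp
  have len: "length L = m" using distinct_card[OF L(1)] L(2) by simp
  define \<pi> where "\<pi> = (\<lambda>i. if i < m then L!i else i)"
  have "bij_betw ((!) L) {..<m} {..<m}" using bij_betw_nth[OF L(1)] len L(2) by simp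
  moreover have "bij_betw ((!) L) {..<m} {..<m} = bij_betw \<pi> {..<m} {..<m}"
    by (rule bij_betw_cong) (simp add: \<pi>_def)
  ultimately have bij: "bij_betw \<pi> {..<m} {..<m}" by simp
  have perm: "\<pi> permutes {..<m}" by (rule bij_imp_permutes[OF bij]) (simp add: \<pi>_def)
  have mapeq: "map (\<lambda>i. (X (\<pi> i), R (\<pi> i))) [0..<m] = map (\<lambda>i. (X i, R i)) L" for R :: "nat \<Rightarrow> ('a \<rightharpoonup> 'd) \<Rightarrow> 'k"
  proof -
    have "map (\<lambda>i. (X i, R i)) L = map (\<lambda>i. (X i, R i)) (map ((!) L) [0..<length L])" by (simp add: map_nth)
    also have "\<dots> = map (\<lambda>i. (X (\<pi> i), R (\<pi> i))) [0..<m]" using len unfolding \<pi>_def by simp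
    finally show ?thesis by simp
  qed
  show ?thesis
  proof (intro exI[of _ \<pi>] conjI perm allI impI)
    fix Dom :: "'a \<Rightarrow> 'd set" and R :: "nat \<Rightarrow> ('a \<rightharpoonup> 'd) \<Rightarrow> 'k::positive_semiring"
    assume h: "(\<forall>i<m. krel Dom (X i) (R i)) \<and> pairwise_consistent Dom m X R"
    have sL: "set L \<subseteq> {..<m}" using L(2) by simp
    have c: "krel Dom (\<Union>(X ` set L)) (iter_ljoin Dom (map (\<lambda>i. (X i, R i)) L)) \<and>
      (\<forall>i\<in>set L. krel_equiv (R i) (marg (iter_ljoin Dom (map (\<lambda>i. (X i, R i)) L)) (X i)))"
      by (rule iter_claim[OF conjunct2[OF h] conjunct1[OF h] L(3) L(1) sL ripL])
    have gw: "global_witness Dom m X R (iter_ljoin Dom (map (\<lambda>i. (X (\<pi> i), R (\<pi> i))) [0..<m]))"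
      unfolding global_witness_def mapeq using c L(2) by simp
    thus "globally_consistent Dom m X R" unfolding globally_consistent_def by blast
    show "global_witness Dom m X R (iter_ljoin Dom (map (\<lambda>i. (X (\<pi> i), R (\<pi> i))) [0..<m]))" using gw .
  qed
qed


end
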